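(* Let $m=2h+1\geq 7$ be odd and let $f_2(x)=x^{3\cdot 2^{h+1}+4}+x^{2^{h+1}+2}+x^{2^{h+1}}\in\mathbb{F}_{2^m}[x]$. Let $s^\infty$ be the sequence $s_t=\operatorname{Tr}(f_2(\alpha^t+1))$, $t\ge0$. Then the binary cyclic code $\mathcal{C}_s$ has parameters $[2^m-1,\,2^m-2-3m,\,d(\mathcal{C}_s)]$ with $4\le d(\mathcal{C}_s)\le 8$, and generator polynomial $$g_s(x)=(x-1)\,m_{\alpha^{-3}}(x)\,m_{\alpha^{-(1+2^{h-1})}}(x)\,m_{\alpha^{-(1+2^{h-1}+2^h)}}(x).$$
   Context: Let $m\ge 1$, $v=2^m-1$, $\alpha$ a primitive element of $\mathbb{F}_{2^m}$, and $\operatorname{Tr}(x)=\sum_{i=0}^{m-1}x^{2^i}$ the absolute trace from $\mathbb{F}_{2^m}$ to $\mathbb{F}_2$. For a polynomial $F$ over $\mathbb{F}_{2^m}$ the binary sequence $s^\infty=(s_t)_{t\ge0}$ is defined by $s_t=\operatorname{Tr}(F(\alpha^t+1))$; it is periodic with period dividing $v$. Its minimal polynomial $g_s(x)$ is the polynomial $1+c_1x+\dots+c_Lx^L\in\mathbb{F}_2[x]$ of least degree $L$ such that $s_i+c_1s_{i-1}+\dots+c_Ls_{i-L}=0$ for all $i\ge L$; its degree $L_s$ is the linear span of $s^\infty$. $\mathcal{C}_s$ denotes the binary cyclic code of length $v$ with generator polynomial $g_s(x)$ (so $\dim\mathcal{C}_s=v-L_s$). For an integer $i$, $m_{\alpha^i}(x)$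 is the minimal polynomial of $\alpha^i$ over $\mathbb{F}_2$. $d(\mathcal{C})$ denotes minimum Hamming distance. *)

theory Defs
  imports "HOL-Library.Z2" "HOL-Computational_Algebra.Polynomial"
begin

(* Binary field F_2 is the library type bit.  The field F_{2^m} is a finite field type 'a
   with CARD('a) = 2^m. *)

definition bit_to :: "bit \<Rightarrow> 'a::ring_1" where
  "bit_to b = (if b = 0 then 0 else 1)"

(* absolute trace F_{2^m} -> F_2 (values lie in the prime field {0,1} of 'a) *)
definition trace :: "nat \<Rightarrow> 'a::field \<Rightarrow> 'a" where
  "trace m x = (\<Sum>i<m. x ^ (2 ^ i))"

definition primitive_elem :: "'a::{finite,field} \<Rightarrow> bool" where
  "primitive_elem \<alpha> \<longleftrightarrow> \<alpha> \<noteq> 0 \<and> (\<forall>x::'a. x \<noteq> 0 \<longrightarrow> (\<exists>k::nat. x = \<alpha> ^ k))"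

definition trace_seq :: "nat \<Rightarrow> ('a::field \<Rightarrow> 'a) \<Rightarrow> 'a \<Rightarrow> nat \<Rightarrow> bit" where
  "trace_seq m F \<alpha> t = (if trace m (F (\<alpha> ^ t + 1)) = 0 then 0 else 1)"

definition annihilates :: "bit poly \<Rightarrow> (nat \<Rightarrow> bit) \<Rightarrow> bool" where
  "annihilates g s \<longleftrightarrow> coeff g 0 = 1 \<and>
     (\<forall>i\<ge>degree g. (\<Sum>j\<le>degree g. coeff g j * s (i - j)) = 0)"

definition is_seq_min_poly :: "(nat \<Rightarrow> bit) \<Rightarrow> bit poly \<Rightarrow> bool" where
  "is_seq_min_poly s g \<longleftrightarrow> annihilates g s \<and>
     (\<forall>g'. annihilates g' s \<longrightarrow> degree g \<le> degree g')"

definition seq_min_poly :: "(nat \<Rightarrow> bit) \<Rightarrow> bit poly" where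
  "seq_min_poly s = (THE g. is_seq_min_poly s g)"

definition linear_span :: "(nat \<Rightarrow> bit) \<Rightarrow> nat" where
  "linear_span s = degree (seq_min_poly s)"

definition is_min_poly_F2 :: "'a::field \<Rightarrow> bit poly \<Rightarrow> bool" where
  "is_min_poly_F2 \<beta> p \<longleftrightarrow> lead_coeff p = 1 \<and> poly (map_poly bit_to p) \<beta> = 0 \<and>
     (\<forall>q. q \<noteq> 0 \<longrightarrow> poly (map_poly bit_to q) \<beta> = 0 \<longrightarrow> degree p \<le> degree q)"

definition min_poly_F2 :: "'a::field \<Rightarrow> bit poly" where
  "min_poly_F2 \<beta> = (THE p. is_min_poly_F2 \<beta> p)"

definition cyclic_code :: "nat \<Rightarrow> bit poly \<Rightarrow> bit poly set" where
  "cyclic_code n g = {c. degree c < n \<and> g dvd c}"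

definition hamming_weight :: "bit poly \<Rightarrow> nat" where
  "hamming_weight c = card {i. coeff c i \<noteq> 0}"

definition min_distance :: "bit poly set \<Rightarrow> nat" where
  "min_distance C = Min {hamming_weight c | c. c \<in> C \<and> c \<noteq> 0}"

definition code_dim :: "bit poly set \<Rightarrow> nat" where
  "code_dim C = (THE k. card C = 2 ^ k)"

definition f2 :: "nat \<Rightarrow> 'a::field \<Rightarrow> 'a" where
  "f2 h x = x ^ (3 * 2 ^ (h + 1) + 4) + x ^ (2 ^ (h + 1) + 2) + x ^ (2 ^ (h + 1))"

end

theory Submission
  imports Defs "HOL-Library.Nat_Bijection" "HOL-Number_Theory.Cong"
begin

lemma c2_add_self: assumes "(2::'a::ring_1) = 0" shows "x + x = (0::'a)"
proof -
  have "x + x = 2 * x" by (simp add: mult_2)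
  thus ?thesis using assms by simp
qed

lemma c2_neg: assumes "(2::'a::ring_1) = 0" shows "- x = (x::'a)"
  using c2_add_self[OF assms, of x] by (rule add.inverse_unique)

lemma c2_sq_add: assumes "(2::'a::comm_ring_1) = 0" shows "(x + y) ^ 2 = x ^ 2 + (y::'a) ^ 2"
proof -
  have "(x + y) ^ 2 = x ^ 2 + y ^ 2 + (x * y + x * y)" by (simp add: power2_eq_square algebra_simps)
  thus ?thesis using c2_add_self[OF assms, of "x*y"] by simp
qed

lemma pow2_Suc: "(x::'a::monoid_mult) ^ (2 ^ Suc k) = (x ^ (2 ^ k)) ^ 2"
  by (simp only: power_Suc2 power_mult)

lemma c2_pow2_add: assumes "(2::'a::comm_ring_1) = 0"
  shows "(x + y) ^ (2 ^ k) = x ^ (2 ^ k) + (y::'a) ^ (2 ^ k)"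
proof (induction k)
  case 0 then show ?case by simp
next
  case (Suc k)
  have "(x + y) ^ (2 ^ Suc k) = ((x + y) ^ (2 ^ k)) ^ 2" by (rule pow2_Suc)
  also have "\<dots> = (x ^ (2 ^ k)) ^ 2 + (y ^ (2 ^ k)) ^ 2" using Suc c2_sq_add[OF assms] by simp
  finally show ?case by (simp only: pow2_Suc)
qed

lemma c2_of_nat: assumes "(2::'a::comm_ring_1) = 0"
  shows "(of_nat k :: 'a) = (if even k then 0 else 1)"
  proof (induction k)
  case 0 then show ?case by simp
next
  case (Suc k) then show ?case using c2_add_self[OF assms, of 1] by (simp add: add.commute)
qed

lemma bit_to_0 [simp]: "bit_to 0 = 0" by (simp add: bit_to_def)
lemma bit_to_1 [simp]: "bit_to 1 = 1" by (simp add: bit_to_def)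

lemma bit_to_add: assumes "(2::'a::ring_1) = 0"
  shows "(bit_to (x + y) :: 'a) = bit_to x + bit_to y"
  by (cases x; cases y) (simp_all add: assms c2_add_self[OF assms])

lemma bit_to_diff: assumes "(2::'a::ring_1) = 0"
  shows "(bit_to (x - y) :: 'a) = bit_to x + bit_to y"
  using bit_to_add[OF assms] by simp

lemma bit_to_mult: "(bit_to (x * y) :: 'a::ring_1) = bit_to x * bit_to y"
  by (cases x; cases y) simp_all

lemma bit_to_eq0: "(bit_to x :: 'a::{ring_1,zero_neq_one}) = 0 \<longleftrightarrow> x = 0"
  by (cases x) simp_all

lemma bit_to_sq: "(bit_to x :: 'a::ring_1) ^ 2 = bit_to x"
  by (cases x) simp_all

lemma coeff_mp: "coeff (map_poly bit_to p) n = bit_to (coeff p n)"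
  by (simp add: coeff_map_poly)

lemma degree_mp: "degree (map_poly (bit_to :: bit \<Rightarrow> 'a::{ring_1,zero_neq_one}) p) = degree p"
  by (rule degree_map_poly) (simp add: bit_to_eq0)

lemma mp_eq0: "map_poly (bit_to :: bit \<Rightarrow> 'a::{ring_1,zero_neq_one}) p = 0 \<longleftrightarrow> p = 0"
  by (rule map_poly_eq_0_iff) (simp_all add: bit_to_eq0)

lemma mp_add: assumes "(2::'a::comm_ring_1) = 0"
  shows "map_poly (bit_to :: bit \<Rightarrow> 'a) (p + q) = map_poly bit_to p + map_poly bit_to q"
  by (rule poly_eqI) (simp only: coeff_add coeff_mp bit_to_add[OF assms])

lemma mp_diff: assumes "(2::'a::comm_ring_1) = 0"
  shows "map_poly (bit_to :: bit \<Rightarrow> 'a) (p - q) = map_poly bit_to p - map_poly bit_to q"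
  apply (rule poly_eqI)
  apply (simp only: coeff_diff coeff_mp bit_to_diff[OF assms])
  apply (simp only: diff_conv_add_uminus c2_neg[OF assms])
  done

lemma mp_mult: assumes "(2::'a::comm_ring_1) = 0"
  shows "map_poly (bit_to :: bit \<Rightarrow> 'a) (p * q) = map_poly bit_to p * map_poly bit_to q"
proof (induction p)
  case 0 then show ?case by simp
next
  case (pCons a p)
  have "map_poly (bit_to :: bit \<Rightarrow> 'a) (pCons a p * q)
      = map_poly bit_to (smult a q) + map_poly bit_to (pCons 0 (p * q))"
    by (simp add: mp_add[OF assms])
  also have "\<dots> = smult (bit_to a) (map_poly bit_to q) + pCons 0 (map_poly bit_to p * map_poly bit_to q)"
    by (simp add: map_poly_smult bit_to_mult map_poly_pCons pCons.IH)
  also have "\<dots> = map_poly bit_to (pCons a p) * map_poly bit_to q"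
    by (simp add: map_poly_pCons)
  finally show ?case .
qed

lemma poly_mp_sq: assumes "(2::'a::comm_ring_1) = 0"
  shows "poly (map_poly (bit_to :: bit \<Rightarrow> 'a) p) (x ^ 2) = (poly (map_poly bit_to p) x) ^ 2"
proof (induction p)
  case 0 then show ?case by simp
next
  case (pCons a p)
  have "poly (map_poly (bit_to :: bit \<Rightarrow> 'a) (pCons a p)) (x ^ 2)
     = bit_to a + x ^ 2 * (poly (map_poly bit_to p) x) ^ 2"
    by (simp add: map_poly_pCons pCons.IH)
  also have "\<dots> = (bit_to a) ^ 2 + (x * poly (map_poly bit_to p) x) ^ 2"
    by (simp add: bit_to_sq power_mult_distrib)
  also have "\<dots> = (bit_to a + x * poly (map_poly bit_to p) x) ^ 2"
    by (rule c2_sq_add[OF assms, symmetric])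
  also have "\<dots> = (poly (map_poly bit_to (pCons a p)) x) ^ 2"
    by (simp add: map_poly_pCons)
  finally show ?case .
qed

lemma poly_mp_pow2: assumes "(2::'a::comm_ring_1) = 0"
  shows "poly (map_poly (bit_to :: bit \<Rightarrow> 'a) p) (x ^ (2 ^ k)) = (poly (map_poly bit_to p) x) ^ (2 ^ k)"
proof (induction k)
  case 0 then show ?case by simp
next
  case (Suc k)
  have "x ^ (2 ^ Suc k) = (x ^ (2 ^ k)) ^ 2" by (rule pow2_Suc)
  hence "poly (map_poly (bit_to :: bit \<Rightarrow> 'a) p) (x ^ (2 ^ Suc k)) = (poly (map_poly bit_to p) x ^ (2 ^ k)) ^ 2"
    by (simp add: poly_mp_sq[OF assms] Suc)
  thus ?case by (simp only: pow2_Suc)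
qed

lemma fin_field_pow:
  fixes x :: "'a::{finite,field}" assumes "x \<noteq> 0"
  shows "x ^ (card (UNIV::'a set) - 1) = 1"
proof -
  let ?U = "UNIV - {0::'a}"
  have bij: "bij_betw (\<lambda>y. x * y) ?U ?U"
    by (rule bij_betw_byWitness[where f' = "\<lambda>y. y / x"]) (use assms in auto)
  have "(\<Prod>y\<in>?U. x * y) = (\<Prod>y\<in>?U. y)"
    using prod.reindex_bij_betw[OF bij, of "\<lambda>y. y"] by simp
  hence "x ^ card ?U * (\<Prod>y\<in>?U. y) = (\<Prod>y\<in>?U. y)"
    by (simp add: prod.distrib)
  moreover have "(\<Prod>y\<in>?U. y) \<noteq> 0" by simp
  ultimately have "x ^ card ?U = 1" by simp
  moreover have "card ?U = card (UNIV::'a set) - 1" by (simp add: card_Diff_subset)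
  ultimately show ?thesis by simp
qed

lemma sum_sq_c2: assumes "(2::'a::comm_ring_1) = 0"
  shows "(\<Sum>i\<in>A. f i) ^ 2 = (\<Sum>i\<in>A. (f i :: 'a) ^ 2)"
proof (induction A rule: infinite_finite_induct)
  case (insert x F) then show ?case by (simp add: c2_sq_add[OF assms])
qed simp_all

locale ff =
  fixes m :: nat and \<alpha> :: "'a::{finite,field}" and n :: nat
  assumes card: "card (UNIV::'a set) = 2 ^ m" and m1: "m \<ge> 1" and prim: "primitive_elem \<alpha>"
    and n_def: "n = 2 ^ m - 1"
begin

lemma alpha_nz: "\<alpha> \<noteq> 0" using prim by (simp add: primitive_elem_def)

lemma n_pos: "n > 0"
proof -
  have "(2::nat) ^ m \<ge> 2 ^ 1" using m1 by (intro power_increasing) auto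
  thus ?thesis using n_def by simp
qed

lemma n_odd: "odd n"
proof -
  have "even ((2::nat) ^ m)" using m1 by simp
  moreover have "(2::nat) ^ m > 0" by simp
  ultimately show ?thesis using n_def by (simp add: odd_pos)
qed

lemma alpha_n: "\<alpha> ^ n = 1"
  using fin_field_pow[OF alpha_nz] card n_def by simp

lemma alpha_mod: "\<alpha> ^ k = \<alpha> ^ (k mod n)"
proof -
  have "k = n * (k div n) + k mod n" by simp
  hence "\<alpha> ^ k = (\<alpha> ^ n) ^ (k div n) * \<alpha> ^ (k mod n)" by (metis power_add power_mult)
  thus ?thesis by (simp add: alpha_n)
qed

lemma alpha_image: "(\<lambda>k. \<alpha> ^ k) ` {..<n} = UNIV - {0}"
proof
  show "(\<lambda>k. \<alpha> ^ k) ` {..<n} \<subseteq> UNIV - {0}" using alpha_nz by auto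
  show "UNIV - {0} \<subseteq> (\<lambda>k. \<alpha> ^ k) ` {..<n}"
  proof
    fix x :: 'a assume "x \<in> UNIV - {0}"
    then obtain k where "x = \<alpha> ^ k" using prim by (auto simp: primitive_elem_def)
    hence "x = \<alpha> ^ (k mod n)" using alpha_mod by simp
    moreover have "k mod n < n" using n_pos by simp
    ultimately show "x \<in> (\<lambda>k. \<alpha> ^ k) ` {..<n}" by auto
  qed
qed

lemma alpha_inj: "inj_on (\<lambda>k. \<alpha> ^ k) {..<n}"
proof (rule eq_card_imp_inj_on)
  show "finite {..<n}" by simp
  have "card (UNIV - {0::'a}) = n" using card n_def by (simp add: card_Diff_subset)
  thus "card ((\<lambda>k. \<alpha> ^ k) ` {..<n}) = card {..<n}" using alpha_image by simp
qed

lemma alpha_eq: "\<alpha> ^ a = \<alpha> ^ b \<longleftrightarrow> a mod n = b mod n"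
proof
  assume "\<alpha> ^ a = \<alpha> ^ b"
  hence "\<alpha> ^ (a mod n) = \<alpha> ^ (b mod n)" using alpha_mod by metis
  thus "a mod n = b mod n" using alpha_inj n_pos by (auto dest: inj_onD)
next
  assume "a mod n = b mod n" thus "\<alpha> ^ a = \<alpha> ^ b" using alpha_mod by metis
qed

lemma alpha_one: "\<alpha> ^ a = 1 \<longleftrightarrow> n dvd a"
  using alpha_eq[of a 0] by (simp add: dvd_eq_mod_eq_0)

lemma char2: "(2::'a) = 0"
proof -
  have ne: "(-1::'a) \<noteq> 0" by simp
  have "\<forall>x::'a. x \<noteq> 0 \<longrightarrow> (\<exists>k. x = \<alpha> ^ k)" using prim by (simp add: primitive_elem_def)
  from this[rule_format, OF ne] obtain k where k: "(-1::'a) = \<alpha> ^ k" by (elim exE)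
  have "\<alpha> ^ (2 * k) = (\<alpha> ^ k) ^ 2" by (simp only: power_mult[symmetric] mult.commute)
  also have "\<dots> = (-1) ^ 2" by (simp only: k)
  also have "\<dots> = 1" by simp
  finally have "n dvd 2 * k" using alpha_one by simp
  moreover have "coprime n 2" using n_odd by simp
  ultimately have "n dvd k" using coprime_dvd_mult_right_iff[of n 2 k] by simp
  hence "\<alpha> ^ k = 1" using alpha_one by simp
  hence m1: "(-1::'a) = 1" using k by simp
  have "(2::'a) = 1 - (-1)" by simp
  also have "\<dots> = 0" by (simp only: m1 diff_self)
  finally show ?thesis .
qed

lemma frob_id: "x ^ (2 ^ m) = (x::'a)"
proof (cases "x = 0")
  case True thus ?thesis using m1 by simp
next
  case False
  have "x ^ n = 1" using fin_field_pow[OF False] card n_def by simp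
  moreover have "2 ^ m = Suc n" using n_def by simp
  ultimately show ?thesis by simp
qed

lemma of_nat_c2: "(of_nat k :: 'a) = (if even k then 0 else 1)"
  by (rule c2_of_nat[OF char2])

lemma tr_add: "trace m (x + y) = trace m x + trace m (y::'a)"
  by (simp add: trace_def c2_pow2_add[OF char2] sum.distrib)

lemma tr_sq: "trace m (x ^ 2) = trace m (x::'a)"
proof -
  let ?f = "\<lambda>i. x ^ (2 ^ i)"
  have "(\<Sum>i<Suc m. ?f i) = ?f 0 + (\<Sum>i<m. ?f (Suc i))" by (rule sum.lessThan_Suc_shift)
  moreover have "(\<Sum>i<Suc m. ?f i) = (\<Sum>i<m. ?f i) + ?f m" by simp
  moreover have "?f m = ?f 0" using frob_id by simp
  ultimately have "(\<Sum>i<m. ?f (Suc i)) = (\<Sum>i<m. ?f i)" by simp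
  moreover have "(x ^ 2) ^ (2 ^ i) = ?f (Suc i)" for i
    by (simp only: power_mult[symmetric] power_Suc)
  ultimately show ?thesis by (simp add: trace_def)
qed

lemma tr_pow2: "trace m (x ^ (2 ^ k)) = trace m (x::'a)"
proof (induction k)
  case (Suc k) thus ?case by (simp only: pow2_Suc tr_sq)
qed simp

lemma tr_one: "trace m (1::'a) = of_nat m"
  by (simp add: trace_def)

end

lemma bit_UNIV: "(UNIV :: bit set) = {0, 1}"
proof -
  have "x \<in> {0, 1}" for x :: bit by (cases x) auto
  thus ?thesis by auto
qed

lemma card_bit: "card (UNIV :: bit set) = 2" by (simp add: bit_UNIV)

lemma finite_bit: "finite (UNIV :: bit set)" by (simp add: bit_UNIV)

lemma deg0_const: "degree (q::'a::zero poly) = 0 \<Longrightarrow> q = [:coeff q 0:]"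
  by (rule poly_eqI) (auto simp: coeff_pCons coeff_eq_0 split: nat.splits)

lemma deg_lt_1: "{q::bit poly. degree q < Suc 0} = (\<lambda>c. [:c:]) ` UNIV"
proof
  show "{q::bit poly. degree q < Suc 0} \<subseteq> (\<lambda>c. [:c:]) ` UNIV"
    using deg0_const by blast
qed auto

lemma deg_lt_SS: "{q::bit poly. degree q < Suc (Suc k)}
   = (\<lambda>(c, q). pCons c q) ` (UNIV \<times> {q. degree q < Suc k})"
proof
  show "{q::bit poly. degree q < Suc (Suc k)} \<subseteq> (\<lambda>(c, q). pCons c q) ` (UNIV \<times> {q. degree q < Suc k})"
  proof
    fix p :: "bit poly" assume p: "p \<in> {q. degree q < Suc (Suc k)}"
    obtain a q where pq: "p = pCons a q" by (cases p) auto
    have "degree q < Suc k" using p pq by (cases "q = 0") auto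
    thus "p \<in> (\<lambda>(c, q). pCons c q) ` (UNIV \<times> {q. degree q < Suc k})" using pq by auto
  qed
  show "(\<lambda>(c, q). pCons c q) ` (UNIV \<times> {q. degree q < Suc k}) \<subseteq> {q::bit poly. degree q < Suc (Suc k)}"
    by auto
qed

lemma card_deg_lt: "finite {q::bit poly. degree q < Suc k} \<and> card {q::bit poly. degree q < Suc k} = 2 ^ Suc k"
proof (induction k)
  case 0
  have "inj (\<lambda>c::bit. [:c:])" by (auto intro: injI)
  hence "card ((\<lambda>c::bit. [:c:]) ` UNIV) = 2" by (simp add: card_image card_bit)
  thus ?case unfolding deg_lt_1 using finite_bit by simp
next
  case (Suc k)
  have inj: "inj_on (\<lambda>(c, q). pCons c q) ((UNIV::bit set) \<times> {q::bit poly. degree q < Suc k})"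
    by (auto intro: inj_onI)
  have fin: "finite ((UNIV::bit set) \<times> {q::bit poly. degree q < Suc k})" using Suc.IH finite_bit by (intro finite_cartesian_product) auto
  have "card ((UNIV::bit set) \<times> {q::bit poly. degree q < Suc k}) = 2 * 2 ^ Suc k"
    using Suc by (simp add: card_cartesian_product card_bit)
  thus ?case using card_image[OF inj] fin by (simp add: deg_lt_SS)
qed

context ff begin

lemma small_annih: "\<exists>q::bit poly. q \<noteq> 0 \<and> degree q \<le> m \<and> poly (map_poly bit_to q) (\<beta>::'a) = 0"
proof -
  let ?D = "{q::bit poly. degree q < Suc m}"
  let ?f = "\<lambda>q. poly (map_poly (bit_to :: bit \<Rightarrow> 'a) q) \<beta>"
  have "\<not> inj_on ?f ?D"
  proof
    assume "inj_on ?f ?D"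
    hence "card ?D \<le> card (UNIV :: 'a set)" by (rule card_inj_on_le) auto
    thus False using card_deg_lt[of m] card by simp
  qed
  then obtain q1 q2 where q: "q1 \<in> ?D" "q2 \<in> ?D" "q1 \<noteq> q2" "?f q1 = ?f q2"
    unfolding inj_on_def by blast
  have "q1 - q2 \<noteq> 0" using q by simp
  moreover have "degree (q1 - q2) \<le> m"
    using q degree_diff_le_max[of q1 q2] by simp
  moreover have "?f (q1 - q2) = 0" using q by (simp add: mp_diff[OF char2])
  ultimately show ?thesis by blast
qed

lemma min_poly_ex: "\<exists>p. is_min_poly_F2 (\<beta>::'a) p \<and> degree p \<le> m"
proof -
  obtain q0 :: "bit poly" where q0: "q0 \<noteq> 0" "degree q0 \<le> m" "poly (map_poly bit_to q0) \<beta> = 0"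
    using small_annih by blast
  let ?P = "\<lambda>q::bit poly. q \<noteq> 0 \<and> poly (map_poly bit_to q) \<beta> = 0"
  obtain p where p: "?P p" "\<forall>y. ?P y \<longrightarrow> degree p \<le> degree y"
    using ex_has_least_nat[of ?P q0 degree] q0 by blast
  have "p \<noteq> 0" using p by simp
  hence "lead_coeff p = 1" by (metis bit_not_zero_iff leading_coeff_0_iff)
  hence "is_min_poly_F2 \<beta> p" using p unfolding is_min_poly_F2_def by blast
  moreover have "degree p \<le> m" using p q0 by force
  ultimately show ?thesis by blast
qed

lemma min_poly_unique:
  assumes "is_min_poly_F2 (\<beta>::'a) p" "is_min_poly_F2 \<beta> q" shows "p = q"
proof (rule ccontr)
  assume ne: "p \<noteq> q"
  have p0: "p \<noteq> 0" and q0: "q \<noteq> 0" using assms by (auto simp: is_min_poly_F2_def)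
  have dpq: "degree p = degree q" using assms p0 q0 unfolding is_min_poly_F2_def by (meson antisym)
  have r0: "p - q \<noteq> 0" using ne by simp
  have rv: "poly (map_poly bit_to (p - q)) \<beta> = 0"
    using assms by (simp add: mp_diff[OF char2] is_min_poly_F2_def)
  have "degree (p - q) \<le> degree p" using degree_diff_le_max[of p q] dpq by simp
  moreover have "coeff (p - q) (degree p) = 0"
    using assms dpq by (simp add: is_min_poly_F2_def)
  ultimately have "degree (p - q) < degree p" using r0
    by (metis le_neq_implies_less leading_coeff_0_iff)
  moreover have "degree p \<le> degree (p - q)" using assms(1) r0 rv by (simp add: is_min_poly_F2_def)
  ultimately show False by simp
qed

lemma min_poly: "is_min_poly_F2 (\<beta>::'a) (min_poly_F2 \<beta>) \<and> degree (min_poly_F2 \<beta>) \<le> m"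
proof -
  obtain p where p: "is_min_poly_F2 \<beta> p" "degree p \<le> m" using min_poly_ex by blast
  have "min_poly_F2 \<beta> = p" unfolding min_poly_F2_def
    using p min_poly_unique by blast
  thus ?thesis using p by simp
qed

lemma min_poly_nz: "min_poly_F2 (\<beta>::'a) \<noteq> 0"
  using min_poly[of \<beta>] by (auto simp: is_min_poly_F2_def)

lemma min_poly_root: "poly (map_poly bit_to (min_poly_F2 \<beta>)) ((\<beta>::'a) ^ (2 ^ k)) = 0"
  using min_poly[of \<beta>] by (simp add: poly_mp_pow2[OF char2] is_min_poly_F2_def)

lemma min_poly_coeff0: assumes "(\<beta>::'a) \<noteq> 0" shows "coeff (min_poly_F2 \<beta>) 0 = 1"
proof (rule ccontr)
  assume a: "coeff (min_poly_F2 \<beta>) 0 \<noteq> 1"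
  obtain c r where cr: "min_poly_F2 \<beta> = pCons c r" by (cases "min_poly_F2 \<beta>") auto
  have c0: "c = 0" using a cr by simp
  have r0: "r \<noteq> 0" using min_poly_nz[of \<beta>] cr c0 by auto
  have "0 = poly (map_poly bit_to (min_poly_F2 \<beta>)) \<beta>" using min_poly_root[of \<beta> 0] by simp
  also have "\<dots> = \<beta> * poly (map_poly bit_to r) \<beta>" by (simp add: cr c0 map_poly_pCons)
  finally have rv: "poly (map_poly bit_to r) \<beta> = 0" using assms by simp
  have "degree (min_poly_F2 \<beta>) \<le> degree r"
    using min_poly[of \<beta>] r0 rv by (simp add: is_min_poly_F2_def)
  thus False using cr r0 by simp
qed

end

context ff begin

lemma bit_to_sum: "(bit_to (\<Sum>j\<in>A. f j) :: 'a) = (\<Sum>j\<in>A. bit_to (f j))"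
proof (induction A rule: infinite_finite_induct)
  case (insert x F)
  thus ?case by (simp only: sum.insert[OF insert.hyps] bit_to_add[OF char2])
qed simp_all

lemma poly_mp_sum: "poly (map_poly (bit_to::bit\<Rightarrow>'a) g) x = (\<Sum>j\<le>degree g. bit_to (coeff g j) * x ^ j)"
  by (simp add: poly_altdef degree_mp coeff_mp)

lemma geo_zero: assumes "\<zeta> ^ n = 1" "\<zeta> \<noteq> 1" shows "(\<Sum>t<n. \<zeta> ^ t) = (0::'a)"
  using geometric_sum[OF assms(2), of n] assms(1) by simp

lemma geo_one: "(\<Sum>t<n. (1::'a) ^ t) = 1"
  using n_odd by (simp add: of_nat_c2)

lemma fourier:
  assumes P: "finite P" "\<forall>\<gamma>\<in>P. \<gamma> \<noteq> 0 \<and> \<gamma> ^ n = 1"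
    and E: "\<forall>t. (\<Sum>\<gamma>\<in>P. \<gamma> ^ t * D \<gamma>) = (0::'a)" and d: "\<delta> \<in> P"
  shows "D \<delta> = 0"
proof -
  have "0 = (\<Sum>t<n. inverse \<delta> ^ t * (\<Sum>\<gamma>\<in>P. \<gamma> ^ t * D \<gamma>))" using E by simp
  also have "\<dots> = (\<Sum>t<n. \<Sum>\<gamma>\<in>P. D \<gamma> * (\<gamma> * inverse \<delta>) ^ t)"
    by (simp add: sum_distrib_left power_mult_distrib mult_ac)
  also have "\<dots> = (\<Sum>\<gamma>\<in>P. \<Sum>t<n. D \<gamma> * (\<gamma> * inverse \<delta>) ^ t)"
    by (rule sum.swap)
  also have "\<dots> = (\<Sum>\<gamma>\<in>P. if \<gamma> = \<delta> then D \<gamma> else 0)"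
  proof (rule sum.cong[OF refl])
    fix \<gamma> assume g: "\<gamma> \<in> P"
    have dnz: "\<delta> \<noteq> 0" and dn: "\<delta> ^ n = 1" using P d by auto
    have gn: "\<gamma> ^ n = 1" using P g by auto
    show "(\<Sum>t<n. D \<gamma> * (\<gamma> * inverse \<delta>) ^ t) = (if \<gamma> = \<delta> then D \<gamma> else 0)"
    proof (cases "\<gamma> = \<delta>")
      case True
      hence "\<gamma> * inverse \<delta> = 1" using dnz by simp
      thus ?thesis using True geo_one by (simp flip: sum_distrib_left)
    next
      case False
      have "\<gamma> * inverse \<delta> \<noteq> 1" using False dnz by (auto simp: field_simps)
      moreover have "(\<gamma> * inverse \<delta>) ^ n = 1" using gn dn by (simp add: power_mult_distrib power_inverse)
      ultimately have "(\<Sum>t<n. (\<gamma> * inverse \<delta>) ^ t) = 0" using geo_zero by blast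
      thus ?thesis using False by (simp flip: sum_distrib_left)
    qed
  qed
  also have "\<dots> = D \<delta>" using d P by simp
  finally show ?thesis by simp
qed

lemma annih_iff:
  assumes P: "finite P" "\<forall>\<gamma>\<in>P. \<gamma> \<noteq> 0 \<and> \<gamma> ^ n = 1"
    and S: "\<forall>t. bit_to (s t) = (\<Sum>\<gamma>\<in>P. \<gamma> ^ t :: 'a)"
  shows "annihilates g s \<longleftrightarrow> coeff g 0 = 1 \<and> (\<forall>\<gamma>\<in>P. poly (map_poly bit_to g) (inverse \<gamma>) = (0::'a))"
proof -
  define D where "D \<gamma> = poly (map_poly (bit_to::bit\<Rightarrow>'a) g) (inverse \<gamma>)" for \<gamma>
  have key: "(bit_to (\<Sum>j\<le>degree g. coeff g j * s (i - j)) :: 'a) = (\<Sum>\<gamma>\<in>P. \<gamma> ^ i * D \<gamma>)"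
    if i: "i \<ge> degree g" for i
  proof -
    have "(bit_to (\<Sum>j\<le>degree g. coeff g j * s (i - j)) :: 'a)
        = (\<Sum>j\<le>degree g. bit_to (coeff g j) * (\<Sum>\<gamma>\<in>P. \<gamma> ^ (i - j)))"
      by (simp only: bit_to_sum bit_to_mult S)
    also have "\<dots> = (\<Sum>j\<le>degree g. \<Sum>\<gamma>\<in>P. bit_to (coeff g j) * \<gamma> ^ (i - j))"
      by (simp add: sum_distrib_left)
    also have "\<dots> = (\<Sum>\<gamma>\<in>P. \<Sum>j\<le>degree g. bit_to (coeff g j) * \<gamma> ^ (i - j))"
      by (rule sum.swap)
    also have "\<dots> = (\<Sum>\<gamma>\<in>P. \<gamma> ^ i * D \<gamma>)"
    proof (rule sum.cong[OF refl])
      fix \<gamma> assume g: "\<gamma> \<in> P"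
      hence gnz: "\<gamma> \<noteq> 0" using P by auto
      have "\<gamma> ^ (i - j) = \<gamma> ^ i * inverse \<gamma> ^ j" if "j \<le> degree g" for j
      proof -
        have "j \<le> i" using that i by simp
        hence "\<gamma> ^ (i - j) = \<gamma> ^ i / \<gamma> ^ j" using gnz by (simp add: power_diff)
        thus ?thesis by (simp add: divide_inverse power_inverse)
      qed
      hence "(\<Sum>j\<le>degree g. bit_to (coeff g j) * \<gamma> ^ (i - j))
           = (\<Sum>j\<le>degree g. \<gamma> ^ i * (bit_to (coeff g j) * inverse \<gamma> ^ j))"
        by (intro sum.cong) (auto simp: mult_ac)
      also have "\<dots> = \<gamma> ^ i * D \<gamma>" by (simp add: D_def poly_mp_sum sum_distrib_left)
      finally show "(\<Sum>j\<le>degree g. bit_to (coeff g j) * \<gamma> ^ (i - j)) = \<gamma> ^ i * D \<gamma>" .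
    qed
    finally show ?thesis .
  qed
  show ?thesis
  proof
    assume A: "annihilates g s"
    have Ei: "(\<Sum>\<gamma>\<in>P. \<gamma> ^ i * D \<gamma>) = 0" if "i \<ge> degree g" for i
      using key[OF that] A that by (simp add: annihilates_def)
    have E: "\<forall>t. (\<Sum>\<gamma>\<in>P. \<gamma> ^ t * D \<gamma>) = 0"
    proof
      fix t
      have "degree g \<le> n * degree g" using n_pos by simp
      hence ge: "t + n * degree g \<ge> degree g" by linarith
      have "\<gamma> ^ (t + n * degree g) = \<gamma> ^ t" if "\<gamma> \<in> P" for \<gamma>
        using P that by (simp add: power_add power_mult)
      hence "(\<Sum>\<gamma>\<in>P. \<gamma> ^ t * D \<gamma>) = (\<Sum>\<gamma>\<in>P. \<gamma> ^ (t + n * degree g) * D \<gamma>)"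
        by (intro sum.cong) auto
      also have "\<dots> = 0" by (rule Ei[OF ge])
      finally show "(\<Sum>\<gamma>\<in>P. \<gamma> ^ t * D \<gamma>) = 0" .
    qed
    have "\<forall>\<gamma>\<in>P. D \<gamma> = 0" using fourier[OF P E] by blast
    thus "coeff g 0 = 1 \<and> (\<forall>\<gamma>\<in>P. poly (map_poly bit_to g) (inverse \<gamma>) = (0::'a))"
      using A by (simp add: D_def annihilates_def)
  next
    assume R: "coeff g 0 = 1 \<and> (\<forall>\<gamma>\<in>P. poly (map_poly bit_to g) (inverse \<gamma>) = (0::'a))"
    have "(\<Sum>j\<le>degree g. coeff g j * s (i - j)) = 0" if "i \<ge> degree g" for i
    proof -
      have "(bit_to (\<Sum>j\<le>degree g. coeff g j * s (i - j)) :: 'a) = 0"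
        using key[OF that] R by (simp add: D_def)
      thus ?thesis by (simp add: bit_to_eq0)
    qed
    thus "annihilates g s" using R by (simp add: annihilates_def)
  qed
qed

lemma inj_inverse: "inj_on (inverse :: 'a \<Rightarrow> 'a) A"
  by (rule inj_onI) simp

lemma annih_card:
  assumes P: "finite P" "\<forall>\<gamma>\<in>P. \<gamma> \<noteq> 0 \<and> \<gamma> ^ n = 1"
    and S: "\<forall>t. bit_to (s t) = (\<Sum>\<gamma>\<in>P. \<gamma> ^ t :: 'a)"
    and A: "annihilates g s"
  shows "card P \<le> degree g"
proof -
  have R: "coeff g 0 = 1 \<and> (\<forall>\<gamma>\<in>P. poly (map_poly bit_to g) (inverse \<gamma>) = (0::'a))"
    using annih_iff[OF P S] A by blast
  hence g0: "g \<noteq> 0" by auto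
  hence mg: "map_poly (bit_to :: bit \<Rightarrow> 'a) g \<noteq> 0" by (simp add: mp_eq0)
  have sub: "inverse ` P \<subseteq> {x. poly (map_poly (bit_to :: bit \<Rightarrow> 'a) g) x = 0}" using R by auto
  have "card P = card (inverse ` P)" using card_image[OF inj_inverse] by simp
  also have "\<dots> \<le> card {x. poly (map_poly (bit_to :: bit \<Rightarrow> 'a) g) x = 0}"
    by (rule card_mono[OF poly_roots_finite[OF mg] sub])
  also have "\<dots> \<le> degree (map_poly (bit_to :: bit \<Rightarrow> 'a) g)" by (rule card_poly_roots_bound[OF mg])
  finally show ?thesis by (simp add: degree_mp)
qed

lemma annih_unique:
  assumes P: "finite P" "\<forall>\<gamma>\<in>P. \<gamma> \<noteq> 0 \<and> \<gamma> ^ n = 1"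
    and S: "\<forall>t. bit_to (s t) = (\<Sum>\<gamma>\<in>P. \<gamma> ^ t :: 'a)"
    and A1: "annihilates g1 s" and A2: "annihilates g2 s"
    and d1: "degree g1 \<le> card P" and d2: "degree g2 \<le> card P"
  shows "g1 = g2"
proof (rule ccontr)
  assume ne: "g1 \<noteq> g2"
  let ?r = "map_poly (bit_to :: bit \<Rightarrow> 'a) (g1 - g2)"
  have r0: "?r \<noteq> 0" using ne by (simp add: mp_eq0)
  have R1: "coeff g1 0 = 1 \<and> (\<forall>\<gamma>\<in>P. poly (map_poly bit_to g1) (inverse \<gamma>) = (0::'a))"
    using annih_iff[OF P S] A1 by blast
  have R2: "coeff g2 0 = 1 \<and> (\<forall>\<gamma>\<in>P. poly (map_poly bit_to g2) (inverse \<gamma>) = (0::'a))"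
    using annih_iff[OF P S] A2 by blast
  have "poly ?r 0 = 0" using R1 R2 by (simp add: poly_0_coeff_0 coeff_mp)
  moreover have "\<forall>\<gamma>\<in>P. poly ?r (inverse \<gamma>) = 0" using R1 R2 by (simp add: mp_diff[OF char2])
  ultimately have sub: "insert 0 (inverse ` P) \<subseteq> {x. poly ?r x = 0}" by auto
  have "0 \<notin> inverse ` P" using P by auto
  hence "Suc (card P) = card (insert 0 (inverse ` P))"
    using P card_image[OF inj_inverse, of P] by simp
  also have "\<dots> \<le> card {x. poly ?r x = 0}"
    by (rule card_mono[OF poly_roots_finite[OF r0] sub])
  also have "\<dots> \<le> degree ?r" by (rule card_poly_roots_bound[OF r0])
  also have "\<dots> \<le> card P" using degree_diff_le_max[of g1 g2] d1 d2 by (simp add: degree_mp)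
  finally show False by simp
qed

lemma seq_min_poly_eq:
  assumes P: "finite P" "\<forall>\<gamma>\<in>P. \<gamma> \<noteq> 0 \<and> \<gamma> ^ n = 1"
    and S: "\<forall>t. bit_to (s t) = (\<Sum>\<gamma>\<in>P. \<gamma> ^ t :: 'a)"
    and A: "annihilates G s" and d: "degree G \<le> card P"
  shows "seq_min_poly s = G \<and> degree G = card P"
proof -
  have isG: "is_seq_min_poly s G"
    unfolding is_seq_min_poly_def using A d annih_card[OF P S] by (meson le_trans)
  have "g = G" if "is_seq_min_poly s g" for g
  proof -
    have "annihilates g s" "degree g \<le> degree G" using that isG by (auto simp: is_seq_min_poly_def)
    thus ?thesis using annih_unique[OF P S _ A _ d] d by simp
  qed
  hence "seq_min_poly s = G" unfolding seq_min_poly_def using isG by (rule the_equality[rotated])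
  moreover have "card P \<le> degree G" by (rule annih_card[OF P S A])
  ultimately show ?thesis using d by simp
qed

end

context ff begin

lemma tr_f2:
  fixes y :: 'a
  assumes mh: "m = 2 * h + 1" and h1: "h \<ge> 1"
  shows "trace m (f2 h (y + 1)) = 1 + trace m (y ^ 3) + trace m (y ^ (1 + 2 ^ (h - 1)))
           + trace m (y ^ (1 + 2 ^ (h - 1) + 2 ^ h))"
proof -
  obtain k where hk: "h = Suc k" using h1 by (cases h) auto
  define Y where "Y = y ^ (2 ^ (h + 1))"
  have Y2: "y ^ (2 ^ (h + 2)) = Y ^ 2"
    unfolding Y_def by (simp only: power_mult[symmetric]) (simp add: hk)
  have fr: "(y + 1) ^ (2 ^ j) = y ^ (2 ^ j) + 1" for j
    using c2_pow2_add[OF char2, of y 1 j] by simp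
  have ex1: "3 * 2 ^ (h + 1) + 4 = 2 ^ (h + 2) + 2 ^ (h + 1) + (2::nat) ^ 2" by simp
  have ex2: "2 ^ (h + 1) + 2 = 2 ^ (h + 1) + (2::nat) ^ 1" by simp
  have a1: "(y + 1) ^ (3 * 2 ^ (h + 1) + 4) = (y ^ (2 ^ (h + 2)) + 1) * (y ^ (2 ^ (h + 1)) + 1) * (y ^ (2 ^ 2) + 1)"
  proof -
    have "(y + 1) ^ (3 * 2 ^ (h + 1) + 4) = (y + 1) ^ (2 ^ (h + 2) + 2 ^ (h + 1) + 2 ^ 2)" by (simp only: ex1)
    also have "\<dots> = (y + 1) ^ (2 ^ (h + 2)) * (y + 1) ^ (2 ^ (h + 1)) * (y + 1) ^ (2 ^ 2)"
      by (simp only: power_add[of "y+1" "2 ^ (h + 2) + 2 ^ (h + 1)" "2 ^ 2"] power_add[of "y+1" "2 ^ (h + 2)" "2 ^ (h + 1)"])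
    finally show ?thesis by (simp only: fr)
  qed
  have a2: "(y + 1) ^ (2 ^ (h + 1) + 2) = (y ^ (2 ^ (h + 1)) + 1) * (y ^ (2 ^ 1) + 1)"
  proof -
    have "(y + 1) ^ (2 ^ (h + 1) + 2) = (y + 1) ^ (2 ^ (h + 1) + 2 ^ 1)" by (simp only: ex2)
    also have "\<dots> = (y + 1) ^ (2 ^ (h + 1)) * (y + 1) ^ (2 ^ 1)"
      by (simp only: power_add[of "y+1" "2 ^ (h + 1)" "2 ^ 1"])
    finally show ?thesis by (simp only: fr)
  qed
  have a3: "(y + 1) ^ (2 ^ (h + 1)) = y ^ (2 ^ (h + 1)) + 1" by (rule fr)
  have "f2 h (y + 1) = (y ^ (2 ^ (h + 2)) + 1) * (y ^ (2 ^ (h + 1)) + 1) * (y ^ (2 ^ 2) + 1)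
      + (y ^ (2 ^ (h + 1)) + 1) * (y ^ (2 ^ 1) + 1) + (y ^ (2 ^ (h + 1)) + 1)"
    unfolding f2_def a1 a2 a3 ..
  also have "\<dots> = (Y ^ 2 + 1) * (Y + 1) * (y ^ (2 ^ 2) + 1) + (Y + 1) * (y ^ (2 ^ 1) + 1) + (Y + 1)"
    by (simp only: Y2 Y_def[symmetric])
  also have "\<dots> = (Y ^ 2 + 1) * (Y + 1) * (y ^ 4 + 1) + (Y + 1) * (y ^ 2 + 1) + (Y + 1)"
    by simp
  also have "\<dots> = Y^3 * y^4 + Y^3 + (Y * y^2)^2 + Y^2 + Y * y^4 + Y + (y^2)^2 + 1
       + Y * y^2 + Y + y^2 + 1 + Y + 1"
    by (simp add: algebra_simps power2_eq_square power3_eq_cube power4_eq_xxxx)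
  finally have F: "trace m (f2 h (y + 1)) = trace m (Y^3 * y^4) + trace m (Y^3) + trace m ((Y * y^2)^2)
       + trace m (Y^2) + trace m (Y * y^4) + trace m Y + trace m ((y^2)^2) + trace m 1
       + trace m (Y * y^2) + trace m Y + trace m (y^2) + trace m 1 + trace m Y + trace m 1"
    by (simp only: tr_add)
  have t1: "trace m (Y^3 * y^4) = trace m (y ^ (1 + 2 ^ (h - 1) + 2 ^ h))"
  proof -
    have "Y^3 * y^4 = y ^ (2 ^ (h + 1) * 3 + 4)" unfolding Y_def by (simp only: power_mult[symmetric] power_add[symmetric])
    also have "2 ^ (h + 1) * 3 + 4 = (1 + 2 ^ (h - 1) + 2 ^ h) * (2::nat) ^ 2" by (simp add: hk)
    finally have "Y^3 * y^4 = (y ^ (1 + 2 ^ (h - 1) + 2 ^ h)) ^ (2 ^ 2)" by (simp only: power_mult)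
    thus ?thesis by (simp only: tr_pow2)
  qed
  have t2: "trace m (Y^3) = trace m (y ^ 3)"
  proof -
    have "Y^3 = (y ^ 3) ^ (2 ^ (h + 1))" unfolding Y_def by (simp only: power_mult[symmetric] mult.commute)
    thus ?thesis by (simp only: tr_pow2)
  qed
  have t3: "trace m (Y * y^4) = trace m (y ^ (1 + 2 ^ (h - 1)))"
  proof -
    have "Y * y^4 = y ^ (2 ^ (h + 1) + 4)" unfolding Y_def by (simp only: power_add[symmetric])
    also have "2 ^ (h + 1) + 4 = (1 + 2 ^ (h - 1)) * (2::nat) ^ 2" by (simp add: hk)
    finally have "Y * y^4 = (y ^ (1 + 2 ^ (h - 1))) ^ (2 ^ 2)" by (simp only: power_mult)
    thus ?thesis by (simp only: tr_pow2)
  qed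
  have t4: "trace m (1::'a) = 1"
  proof -
    have "trace m (1::'a) = of_nat m" by (rule tr_one)
    also have "\<dots> = 1" unfolding of_nat_c2 using mh by simp
    finally show ?thesis .
  qed
  have "trace m (f2 h (y + 1)) = (1 + trace m (y ^ 3) + trace m (y ^ (1 + 2 ^ (h - 1)))
           + trace m (y ^ (1 + 2 ^ (h - 1) + 2 ^ h)))
        + 2 * (trace m (Y * y^2) + 2 * trace m Y + trace m (y^2) + 1)"
    unfolding F t1 t2 t3 t4 tr_sq by (simp add: algebra_simps)
  thus ?thesis by (simp add: char2)
qed

end

definition rot :: "nat \<Rightarrow> nat \<Rightarrow> nat set \<Rightarrow> nat set" where
  "rot m d B = (\<lambda>p. (p + d) mod m) ` B"

lemma rot_inj: fixes m d :: nat assumes "m > 0" shows "inj_on (\<lambda>p. (p + d) mod m) {..<m}"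
proof (rule inj_onI)
  fix p q assume pq: "p \<in> {..<m}" "q \<in> {..<m}" "(p + d) mod m = (q + d) mod m"
  hence "[p + d = q + d] (mod m)" by (simp add: cong_def)
  hence "[p = q] (mod m)" by (simp add: cong_add_rcancel_nat)
  thus "p = q" using pq by (simp add: cong_def)
qed

lemma pow2_cong: fixes m x :: nat assumes "m > 0" shows "[2 ^ x = 2 ^ (x mod m)] (mod (2 ^ m - 1 :: nat))"
proof -
  have e: "(2::nat) ^ m = (2 ^ m - 1) + 1" by simp
  have c: "[2 ^ m = 1] (mod (2 ^ m - 1 :: nat))"
    unfolding cong_def by (subst e) (simp only: mod_add_self1)
  have "(2::nat) ^ x = 2 ^ (m * (x div m) + x mod m)" by simp
  also have "\<dots> = (2 ^ m) ^ (x div m) * 2 ^ (x mod m)" by (simp only: power_add power_mult)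
  finally have "(2::nat) ^ x = (2 ^ m) ^ (x div m) * 2 ^ (x mod m)" .
  moreover have "[(2 ^ m) ^ (x div m) * 2 ^ (x mod m) = 1 ^ (x div m) * 2 ^ (x mod m)] (mod (2 ^ m - 1 :: nat))"
    by (intro cong_scalar_right cong_pow c)
  ultimately show ?thesis by simp
qed

lemma rot_cong:
  fixes m d :: nat
  assumes "m > 0" "B \<subseteq> {..<m}"
  shows "[set_encode B * 2 ^ d = set_encode (rot m d B)] (mod (2 ^ m - 1))"
proof -
  have fin: "finite B" using assms finite_subset by blast
  have "set_encode B * 2 ^ d = (\<Sum>p\<in>B. (2::nat) ^ (p + d))"
    by (simp add: set_encode_def sum_distrib_right power_add)
  moreover have "[(\<Sum>p\<in>B. (2::nat) ^ (p + d)) = (\<Sum>p\<in>B. 2 ^ ((p + d) mod m))] (mod (2 ^ m - 1))"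
    by (intro cong_sum pow2_cong assms)
  moreover have "(\<Sum>p\<in>B. (2::nat) ^ ((p + d) mod m)) = set_encode (rot m d B)"
  proof -
    have "inj_on (\<lambda>p. (p + d) mod m) B" using rot_inj[OF assms(1)] assms(2) inj_on_subset by blast
    thus ?thesis by (simp add: set_encode_def rot_def sum.reindex)
  qed
  ultimately show ?thesis by simp
qed

lemma set_encode_lessThan: "set_encode {..<m} = 2 ^ m - 1"
proof -
  have "{q. q < m} = {..<m}" by auto
  thus ?thesis using mask_eq_sum_exp_nat[of m] by (simp add: set_encode_def)
qed

lemma set_encode_proper:
  assumes "B \<subseteq> {..<m}" "B \<noteq> {..<m}"
  shows "set_encode B < 2 ^ m - 1"
proof -
  have "set_encode {..<m} = sum ((^) 2) ({..<m} - B) + set_encode B"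
    unfolding set_encode_def by (rule sum.subset_diff[OF assms(1)]) simp
  moreover have "sum ((^) (2::nat)) ({..<m} - B) > 0"
    using assms by (intro sum_pos) auto
  ultimately show ?thesis using set_encode_lessThan by simp
qed

lemma rot_sub: "m > 0 \<Longrightarrow> rot m d B \<subseteq> {..<m}" by (auto simp: rot_def)

lemma card_rot: assumes "m > 0" "B \<subseteq> {..<m}" shows "card (rot m d B) = card B"
proof -
  have "inj_on (\<lambda>p. (p + d) mod m) B" using inj_on_subset[OF rot_inj[OF assms(1)] assms(2)] .
  thus ?thesis by (simp add: rot_def card_image)
qed

lemma rot_residue:
  assumes "m > 0" "B \<subseteq> {..<m}" "card B < m"
  shows "(set_encode B * 2 ^ d) mod (2 ^ m - 1) = set_encode (rot m d B)"
proof -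
  have "card (rot m d B) < m" using card_rot[OF assms(1,2)] assms(3) by simp
  hence "rot m d B \<noteq> {..<m}"
  proof (intro notI)
    assume "card (rot m d B) < m" "rot m d B = {..<m}"
    thus False by simp
  qed
  hence "set_encode (rot m d B) < 2 ^ m - 1" using set_encode_proper rot_sub[OF assms(1)] by blast
  thus ?thesis using rot_cong[OF assms(1,2), of d] by (simp add: cong_def)
qed

lemma mod_lt2: assumes "x < 2 * m" shows "(x::nat) mod m = (if x < m then x else x - m)"
proof (cases "x < m")
  case True thus ?thesis by simp
next
  case False
  have "x mod m = (x - m) mod m" using False by (intro le_mod_geq) simp
  also have "\<dots> = x - m" using False assms by (intro mod_less) simp
  finally show ?thesis using False by simp
qed

lemma rot_fix:
  assumes "0 \<in> B" "0 \<in> B'" "\<forall>p\<in>B. p \<le> h" "\<forall>p\<in>B'. p \<le> h" "m = 2 * h + 1"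
    "rot m d B = B'" "d < m"
  shows "d = 0 \<and> B = B'"
proof -
  have "(\<lambda>p. (p + d) mod m) 0 \<in> (\<lambda>p. (p + d) mod m) ` B" using assms(1) by (rule imageI)
  moreover have "(\<lambda>p. (p + d) mod m) 0 = d" using assms(7) by simp
  ultimately have "d \<in> B'" using assms(6) unfolding rot_def by simp
  hence dh: "d \<le> h" using assms(4) by blast
  have "0 \<in> (\<lambda>p. (p + d) mod m) ` B" using assms(2,6) unfolding rot_def by simp
  then obtain p where p: "p \<in> B" "0 = (p + d) mod m" by (rule imageE)
  have "p \<le> h" using assms(3) p(1) by blast
  hence "p + d < m" using dh assms(5) by linarith
  hence "(p + d) mod m = p + d" by (rule mod_less)
  hence d0: "d = 0" using p(2) by simp
  have "(\<lambda>p. (p + 0) mod m) ` B = (\<lambda>p. p) ` B"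
  proof (rule image_cong[OF refl])
    fix q assume "q \<in> B"
    hence "q \<le> h" using assms(3) by blast
    hence "q < m" using assms(5) by linarith
    thus "(q + 0) mod m = q" by simp
  qed
  hence "rot m 0 B = B" by (simp add: rot_def)
  thus ?thesis using d0 assms(6) by simp
qed

lemma rot0: assumes "B \<subseteq> {..<m}" shows "rot m 0 B = B"
proof -
  have "(\<lambda>p. (p + 0) mod m) ` B = (\<lambda>p. p) ` B"
  proof (rule image_cong[OF refl])
    fix q assume "q \<in> B"
    hence "q < m" using assms by blast
    thus "(q + 0) mod m = q" by simp
  qed
  thus ?thesis by (simp add: rot_def)
qed

lemma set_encode_pos: "finite B \<Longrightarrow> B \<noteq> {} \<Longrightarrow> set_encode B > 0"
  unfolding set_encode_def by (intro sum_pos) auto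

lemma res_dist_le:
  assumes mh: "m = 2 * h + 1" and h3: "h \<ge> 3"
    and B: "0 \<in> B" "\<forall>p\<in>B. p \<le> h" "card B \<le> 3" and B': "0 \<in> B'" "\<forall>p\<in>B'. p \<le> h" "card B' \<le> 3"
    and ij: "j \<le> i" "i < m"
    and eq: "(set_encode B * 2 ^ i) mod (2 ^ m - 1) = (set_encode B' * 2 ^ j) mod (2 ^ m - 1)"
  shows "B = B' \<and> i = j"
proof -
  define d where "d = i - j"
  have m0: "m > 0" using mh by simp
  have Bs: "B \<subseteq> {..<m}" using B mh by fastforce
  have B's: "B' \<subseteq> {..<m}" using B' mh by fastforce
  have cB: "card B < m" using B mh h3 by simp
  have cB': "card B' < m" using B' mh h3 by simp
  have "even ((2::nat) ^ m)" using mh by simp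
  moreover have "(2::nat) ^ m > 0" by simp
  ultimately have "odd (2 ^ m - 1 :: nat)" by (simp add: odd_pos)
  hence cop: "coprime ((2::nat) ^ j) (2 ^ m - 1)" by (simp add: coprime_power_left_iff)
  have "set_encode B * 2 ^ i = (set_encode B * 2 ^ d) * 2 ^ j"
    using ij by (simp add: d_def power_add[symmetric] mult.assoc)
  hence "[(set_encode B * 2 ^ d) * 2 ^ j = set_encode B' * 2 ^ j] (mod (2 ^ m - 1))"
    unfolding cong_def using eq by metis
  hence "[set_encode B * 2 ^ d = set_encode B'] (mod (2 ^ m - 1))"
    using cong_mult_rcancel_nat[OF cop] by blast
  hence "(set_encode B * 2 ^ d) mod (2 ^ m - 1) = (set_encode B' * 2 ^ 0) mod (2 ^ m - 1)"
    by (simp add: cong_def)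
  hence "set_encode (rot m d B) = set_encode (rot m 0 B')"
    using rot_residue[OF m0 Bs cB, of d] rot_residue[OF m0 B's cB', of 0] by simp
  moreover have "rot m 0 B' = B'" using rot0[OF B's] .
  ultimately have "set_encode (rot m d B) = set_encode B'" by simp
  moreover have "finite (rot m d B)" using rot_sub[OF m0] finite_subset by blast
  moreover have "finite B'" using B's finite_subset by blast
  ultimately have "rot m d B = B'" using set_encode_eq by blast
  moreover have "d < m" using ij d_def by simp
  ultimately have "d = 0 \<and> B = B'" using rot_fix[OF B(1) B'(1) B(2) B'(2) mh] by blast
  thus ?thesis using d_def ij by simp
qed

lemma res_dist:
  assumes mh: "m = 2 * h + 1" and h3: "h \<ge> 3"
    and B: "0 \<in> B" "\<forall>p\<in>B. p \<le> h" "card B \<le> 3" and B': "0 \<in> B'" "\<forall>p\<in>B'. p \<le> h" "card B' \<le> 3"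
    and ij: "i < m" "j < m"
    and eq: "(set_encode B * 2 ^ i) mod (2 ^ m - 1) = (set_encode B' * 2 ^ j) mod (2 ^ m - 1)"
  shows "B = B' \<and> i = j"
proof (cases "j \<le> i")
  case True thus ?thesis using res_dist_le[OF mh h3 B B' True ij(1) eq] by blast
next
  case False thus ?thesis using res_dist_le[OF mh h3 B' B _ ij(2) eq[symmetric]] by simp
qed

lemma res_nz:
  assumes mh: "m = 2 * h + 1" and h3: "h \<ge> 3"
    and B: "0 \<in> B" "\<forall>p\<in>B. p \<le> h" "card B \<le> 3"
  shows "(set_encode B * 2 ^ i) mod (2 ^ m - 1) \<noteq> 0"
proof -
  have m0: "m > 0" using mh by simp
  have Bs: "B \<subseteq> {..<m}" using B mh by fastforce
  have cB: "card B < m" using B mh h3 by simp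
  have "finite (rot m i B)" "rot m i B \<noteq> {}" using Bs finite_subset B(1) by (auto simp: rot_def)
  hence "set_encode (rot m i B) > 0" by (rule set_encode_pos)
  thus ?thesis using rot_residue[OF m0 Bs cB] by simp
qed

lemma cyclic_code_image:
  assumes G0: "G \<noteq> 0" and dv: "degree G < v"
  shows "cyclic_code v G = (\<lambda>q. G * q) ` {q. degree q < v - degree G}"
proof
  show "cyclic_code v G \<subseteq> (\<lambda>q. G * q) ` {q. degree q < v - degree G}"
  proof
    fix c assume "c \<in> cyclic_code v G"
    hence c: "degree c < v" "G dvd c" by (auto simp: cyclic_code_def)
    then obtain q where q: "c = G * q" by (auto elim: dvdE)
    have "degree q < v - degree G"
    proof (cases "q = 0")
      case True thus ?thesis using dv by simp
    next
      case False
      hence "degree c = degree G + degree q" using q G0 by (simp add: degree_mult_eq)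
      thus ?thesis using c by simp
    qed
    thus "c \<in> (\<lambda>q. G * q) ` {q. degree q < v - degree G}" using q by blast
  qed
  show "(\<lambda>q. G * q) ` {q. degree q < v - degree G} \<subseteq> cyclic_code v G"
  proof
    fix c assume "c \<in> (\<lambda>q. G * q) ` {q. degree q < v - degree G}"
    then obtain q where q: "c = G * q" "degree q < v - degree G" by blast
    have "degree c \<le> degree G + degree q" using q degree_mult_le by blast
    hence "degree c < v" using q dv by simp
    thus "c \<in> cyclic_code v G" using q by (simp add: cyclic_code_def)
  qed
qed

lemma cyclic_code_card:
  assumes G0: "G \<noteq> 0" and dv: "degree G < v"
  shows "finite (cyclic_code v G) \<and> card (cyclic_code v G) = 2 ^ (v - degree G)"
proof -
  have inj: "inj_on (\<lambda>q. G * q) {q. degree q < v - degree G}"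
    using G0 by (auto intro: inj_onI)
  obtain k where k: "v - degree G = Suc k" using dv by (cases "v - degree G") auto
  have "finite {q::bit poly. degree q < Suc k} \<and> card {q::bit poly. degree q < Suc k} = 2 ^ Suc k"
    by (rule card_deg_lt)
  thus ?thesis using card_image[OF inj] cyclic_code_image[OF G0 dv] k by simp
qed

lemma code_dim_eq:
  assumes G0: "G \<noteq> 0" and dv: "degree G < v"
  shows "code_dim (cyclic_code v G) = v - degree G"
proof -
  have c: "card (cyclic_code v G) = 2 ^ (v - degree G)" using cyclic_code_card[OF assms] by simp
  show ?thesis unfolding code_dim_def c
    by (rule the_equality) (auto simp: power_inject_exp)
qed

lemma supp_finite: "finite {i. coeff (c::'a::zero poly) i \<noteq> 0}"
proof (rule finite_subset)
  show "{i. coeff c i \<noteq> 0} \<subseteq> {..degree c}" by (auto intro: le_degree)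
qed simp

lemma poly_as_supp_sum:
  "(\<Sum>i\<le>degree c. coeff c i * x ^ i) = (\<Sum>i\<in>{i. coeff c i \<noteq> 0}. coeff c i * (x::'a::comm_semiring_1) ^ i)"
  by (rule sum.mono_neutral_right) (auto intro: le_degree)

lemma poly_bit_one: "poly c (1::bit) = of_nat (hamming_weight c)"
proof -
  have "poly c (1::bit) = (\<Sum>i\<in>{i. coeff c i \<noteq> 0}. coeff c i * 1 ^ i)"
    by (simp only: poly_altdef poly_as_supp_sum)
  also have "\<dots> = (\<Sum>i\<in>{i. coeff c i \<noteq> 0}. 1)" by (intro sum.cong) auto
  finally show ?thesis by (simp add: hamming_weight_def)
qed

lemma even_weight: assumes "[:-1, 1:] dvd c" shows "even (hamming_weight (c::bit poly))"
proof -
  have "poly c 1 = 0" using assms by (simp add: poly_eq_0_iff_dvd)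
  hence "(of_nat (hamming_weight c) :: bit) = 0" by (simp add: poly_bit_one)
  thus ?thesis using c2_of_nat[of "hamming_weight c", where 'a = bit] by (auto split: if_splits)
qed

lemma weight_pos: assumes "c \<noteq> 0" shows "hamming_weight c > 0"
proof -
  obtain i where "coeff c i \<noteq> 0" using assms by (metis leading_coeff_0_iff)
  hence "{i. coeff c i \<noteq> 0} \<noteq> {}" by auto
  thus ?thesis using supp_finite[of c] by (simp add: hamming_weight_def card_gt_0_iff)
qed

definition mon :: "nat set \<Rightarrow> bit poly" where
  "mon S = (\<Sum>k\<in>S. monom 1 k)"

lemma coeff_mon: "finite S \<Longrightarrow> coeff (mon S) i = (if i \<in> S then 1 else 0)"
  by (simp add: mon_def coeff_sum coeff_monom)

lemma choose4: "24 * (n choose 4) = n * (n - 1) * (n - 2) * (n - 3)"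
proof -
  have e1: "4 * (n choose 4) = n * ((n - 1) choose 3)" using times_binomial_minus1_eq[of 4 n] by simp
  have e2: "3 * ((n - 1) choose 3) = (n - 1) * ((n - 2) choose 2)"
    using times_binomial_minus1_eq[of 3 "n - 1"] by (simp add: numeral_2_eq_2 numeral_3_eq_3)
  have e3: "2 * ((n - 2) choose 2) = (n - 2) * (n - 3)"
    using times_binomial_minus1_eq[of 2 "n - 2"] by (simp add: numeral_2_eq_2 numeral_3_eq_3)
  have "24 * (n choose 4) = 6 * (4 * (n choose 4))" by simp
  also have "\<dots> = 2 * n * (3 * ((n - 1) choose 3))" unfolding e1 by simp
  also have "\<dots> = n * (n - 1) * (2 * ((n - 2) choose 2))" unfolding e2 by simp
  also have "\<dots> = n * (n - 1) * (n - 2) * (n - 3)" unfolding e3 by simp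
  finally show ?thesis .
qed

lemma count_ineq:
  assumes m7: "m \<ge> 7"
  shows "2 ^ (3 * m + 1) < (2 ^ m - 1) choose 4"
proof -
  define x where "x = (2::nat) ^ m - 4"
  have "(2::nat) ^ m \<ge> 2 ^ 7" using m7 by (intro power_increasing) auto
  hence x124: "x \<ge> 124" and N: "(2::nat) ^ m = x + 4" by (auto simp: x_def)
  have a: "31 * (x + 4) \<le> 32 * x" using x124 by simp
  have "(31 * (x + 4)) ^ 3 \<le> (32 * x) ^ 3" by (rule power_mono[OF a]) simp
  moreover have "(31 * (x + 4)) ^ 3 = 31 ^ 3 * (x + 4) ^ 3" by (rule power_mult_distrib)
  moreover have "(32 * x) ^ 3 = 32 ^ 3 * x ^ 3" by (rule power_mult_distrib)
  ultimately have b: "29791 * (x + 4) ^ 3 \<le> 32768 * x ^ 3" by simp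
  have "48 * 29791 * (x + 4) ^ 3 \<le> 48 * 32768 * x ^ 3" using b by simp
  also have "\<dots> < 29791 * x * x ^ 3"
  proof -
    have "x ^ 3 > 0" using x124 by simp
    moreover have "48 * 32768 < 29791 * x" using x124 by simp
    ultimately show ?thesis by simp
  qed
  finally have "48 * (x + 4) ^ 3 < x * x ^ 3"
    by (simp add: mult.assoc mult.left_commute[of 29791])
  moreover have "x ^ 4 = x * x ^ 3" by (simp add: power4_eq_xxxx power3_eq_cube)
  ultimately have c: "48 * (x + 4) ^ 3 < x ^ 4" by simp
  have "x * x * x * x \<le> (x + 3) * (x + 2) * (x + 1) * x"
    by (intro mult_mono) auto
  hence "x ^ 4 \<le> (x + 3) * (x + 2) * (x + 1) * x" by (simp only: power4_eq_xxxx)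
  also have "\<dots> = (x + 3) * (x + 3 - 1) * (x + 3 - 2) * (x + 3 - 3)" by simp
  also have "\<dots> = 24 * ((x + 3) choose 4)" by (rule choose4[symmetric])
  also have "x + 3 = 2 ^ m - 1" using N by simp
  finally have d: "x ^ 4 \<le> 24 * ((2 ^ m - 1) choose 4)" .
  have "24 * 2 ^ (3 * m + 1) = 48 * ((2::nat) ^ m) ^ 3"
    by (simp add: power_add power_mult[symmetric] mult.commute)
  also have "\<dots> = 48 * (x + 4) ^ 3" using N by simp
  finally show ?thesis using c d by linarith
qed

lemma low_weight_word:
  assumes G0: "G \<noteq> 0" and dG: "degree G \<ge> 1" and cnt: "2 ^ degree G < n choose 4"
  shows "\<exists>c. c \<in> cyclic_code n G \<and> c \<noteq> 0 \<and> hamming_weight c \<le> 8"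
proof -
  define X where "X = {S. S \<subseteq> {..<n} \<and> card S = 4}"
  define f where "f S = mon S mod G" for S
  define Q where "Q = {q::bit poly. degree q < Suc (degree G - 1)}"
  have cX: "card X = n choose 4" unfolding X_def using n_subsets[of "{..<n}" 4] by simp
  have Q: "finite Q \<and> card Q = 2 ^ degree G" unfolding Q_def using card_deg_lt[of "degree G - 1"] dG by simp
  have img: "f ` X \<subseteq> Q"
  proof
    fix q assume "q \<in> f ` X"
    then obtain S where q: "q = mon S mod G" by (auto simp: f_def)
    have "degree q < degree G"
    proof (cases "q = 0")
      case True thus ?thesis using dG by simp
    next
      case False thus ?thesis using q G0 degree_mod_less' by blast
    qed
    thus "q \<in> Q" unfolding Q_def using dG by simp
  qed
  have "\<not> inj_on f X"
  proof
    assume "inj_on f X"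
    hence "card X \<le> card Q" using card_inj_on_le img Q by blast
    thus False using cX Q cnt by simp
  qed
  then obtain S T where ST: "S \<in> X" "T \<in> X" "S \<noteq> T" "f S = f T" unfolding inj_on_def by blast
  have finS: "finite S" and finT: "finite T" using ST unfolding X_def by (auto intro: finite_subset)
  define c where "c = mon S - mon T"
  have cc: "coeff c i = (if i \<in> S then 1 else 0) - (if i \<in> T then 1 else 0)" for i
    unfolding c_def by (simp add: coeff_mon finS finT)
  have dvd: "G dvd c" using ST(4) unfolding c_def f_def by (simp add: mod_eq_dvd_iff)
  obtain i where i: "(i \<in> S) \<noteq> (i \<in> T)" using ST(3) by blast
  have "coeff c i \<noteq> 0" using i cc[of i] by auto
  hence c0: "c \<noteq> 0" by auto
  have "card S = 4" using ST X_def by simp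
  hence "S \<noteq> {}" by auto
  hence "n > 0" using ST(1) X_def by auto
  have "degree c \<le> n - 1"
  proof (rule degree_le, intro allI impI)
    fix j assume "n - 1 < j"
    hence "j \<notin> S" "j \<notin> T" using ST unfolding X_def by auto
    thus "coeff c j = 0" using cc[of j] by simp
  qed
  hence dc: "degree c < n" using \<open>n > 0\<close> by simp
  have "{j. coeff c j \<noteq> 0} \<subseteq> S \<union> T" using cc by auto
  hence "hamming_weight c \<le> card (S \<union> T)" unfolding hamming_weight_def
    using finS finT by (intro card_mono) auto
  also have "\<dots> \<le> card S + card T" by (rule card_Un_le)
  also have "\<dots> = 8" using ST X_def by simp
  finally show ?thesis using c0 dc dvd by (auto simp: cyclic_code_def)
qed

lemma min_dist_bounds:
  assumes G0: "G \<noteq> 0" and dv: "degree G < v"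
    and ex: "\<exists>c. c \<in> cyclic_code v G \<and> c \<noteq> 0 \<and> hamming_weight c \<le> 8"
    and lb: "\<forall>c\<in>cyclic_code v G. c \<noteq> 0 \<longrightarrow> hamming_weight c \<ge> 4"
  shows "4 \<le> min_distance (cyclic_code v G) \<and> min_distance (cyclic_code v G) \<le> 8"
proof -
  define W where "W = {hamming_weight c | c. c \<in> cyclic_code v G \<and> c \<noteq> 0}"
  have "W = hamming_weight ` {c \<in> cyclic_code v G. c \<noteq> 0}" unfolding W_def by auto
  moreover have "finite (cyclic_code v G)" using cyclic_code_card[OF G0 dv] by simp
  ultimately have finW: "finite W" by simp
  obtain c where c: "c \<in> cyclic_code v G" "c \<noteq> 0" "hamming_weight c \<le> 8" using ex by blast
  have cW: "hamming_weight c \<in> W" using c unfolding W_def by blast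
  hence neW: "W \<noteq> {}" by auto
  have "Min W \<le> 8" using Min_le[OF finW cW] c(3) by simp
  moreover have "4 \<le> Min W" using finW neW lb unfolding W_def by auto
  ultimately show ?thesis unfolding min_distance_def W_def by simp
qed

context ff begin

lemma poly_mp_supp: "poly (map_poly (bit_to::bit\<Rightarrow>'a) c) x = (\<Sum>k\<in>{k. coeff c k \<noteq> 0}. x ^ k)"
proof -
  have "poly (map_poly (bit_to::bit\<Rightarrow>'a) c) x = (\<Sum>k\<le>degree c. bit_to (coeff c k) * x ^ k)"
    by (rule poly_mp_sum)
  also have "\<dots> = (\<Sum>k\<in>{k. coeff c k \<noteq> 0}. bit_to (coeff c k) * x ^ k)"
    by (rule sum.mono_neutral_right) (auto intro: le_degree)
  also have "\<dots> = (\<Sum>k\<in>{k. coeff c k \<noteq> 0}. x ^ k)" by (intro sum.cong) auto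
  finally show ?thesis .
qed

lemma weight_ge4:
  assumes d1: "[:-1, 1:] dvd G" and root: "poly (map_poly bit_to G) \<beta> = (0::'a)" and bnz: "\<beta> \<noteq> 0"
    and bord: "\<forall>k. 0 < k \<and> k < n \<longrightarrow> \<beta> ^ k \<noteq> 1"
    and c: "c \<in> cyclic_code n G" "c \<noteq> 0"
  shows "hamming_weight c \<ge> 4"
proof -
  have Gc: "G dvd c" and dc: "degree c < n" using c by (auto simp: cyclic_code_def)
  have ev: "even (hamming_weight c)" using d1 Gc dvd_trans even_weight by blast
  have pos: "hamming_weight c > 0" using weight_pos[OF c(2)] .
  have "hamming_weight c \<noteq> 2"
  proof
    assume "hamming_weight c = 2"
    then obtain i j where ij: "{k. coeff c k \<noteq> 0} = {i, j}" "i \<noteq> j"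
      unfolding hamming_weight_def card_2_iff by blast
    obtain q where q: "c = G * q" using Gc by (auto elim: dvdE)
    have "poly (map_poly (bit_to::bit\<Rightarrow>'a) c) \<beta> = 0"
      using root by (simp add: q mp_mult[OF char2])
    hence s0: "\<beta> ^ i + \<beta> ^ j = 0" using ij by (simp add: poly_mp_supp)
    have ieq: "\<beta> ^ i = \<beta> ^ j"
    proof -
      have "\<beta> ^ j = - (\<beta> ^ i)" using s0 by (simp add: eq_neg_iff_add_eq_0 add.commute)
      thus ?thesis using c2_neg[OF char2] by simp
    qed
    have "i \<in> {k. coeff c k \<noteq> 0}" "j \<in> {k. coeff c k \<noteq> 0}" using ij(1) by simp_all
    hence "coeff c i \<noteq> 0" "coeff c j \<noteq> 0" by blast+
    hence "i \<le> degree c" "j \<le> degree c" by (simp_all add: le_degree)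
    hence ijn: "i < n" "j < n" using dc by auto
    have gen: "\<beta> ^ (b - a) = 1" if "a < b" "\<beta> ^ a = \<beta> ^ b" for a b
    proof -
      have "b = a + (b - a)" using that by simp
      hence "\<beta> ^ b = \<beta> ^ (a + (b - a))" by (rule arg_cong)
      hence "\<beta> ^ b = \<beta> ^ a * \<beta> ^ (b - a)" by (simp only: power_add)
      thus ?thesis using that bnz by simp
    qed
    show False
    proof (cases "i < j")
      case True
      thus False using gen[OF True ieq] bord ijn by simp
    next
      case False
      hence "j < i" using ij by simp
      thus False using gen[OF \<open>j < i\<close> ieq[symmetric]] bord ijn by simp
    qed
  qed
  thus ?thesis using ev pos by presburger
qed

end

lemma exp_bound: "m \<ge> 4 \<Longrightarrow> 3 * m + 2 < (2::nat) ^ m"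
proof (induction m rule: nat_induct_at_least)
  case base show ?case by simp
next
  case (Suc k)
  have "3 * Suc k + 2 = (3 * k + 2) + 3" by simp
  also have "\<dots> < 2 ^ k + 3" using Suc.IH by linarith
  also have "\<dots> \<le> 2 ^ k + 2 ^ k" using Suc.IH by linarith
  also have "\<dots> = 2 ^ Suc k" by simp
  finally show ?case .
qed
lemma n_mod3: assumes "m = 2 * h + 1" shows "((2::nat) ^ m - 1) mod 3 = 1"
proof -
  have "[(4::nat) ^ h = 1 ^ h] (mod 3)" by (intro cong_pow) (simp add: cong_def)
  hence "[2 * (4::nat) ^ h = 2 * 1] (mod 3)" by (intro cong_scalar_left) simp
  moreover have "(2::nat) ^ m = 2 * 4 ^ h"
  proof -
    have "(2::nat) ^ m = 2 * (2 ^ 2) ^ h" using assms by (simp only: power_mult[symmetric] power_Suc Suc_eq_plus1[symmetric])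
    thus ?thesis by simp
  qed
  ultimately have x2: "(2::nat) ^ m mod 3 = 2" by (simp add: cong_def)
  define x where "x = (2::nat) ^ m"
  have xm: "x mod 3 = 2" using x2 x_def by simp
  have "3 * (x div 3) + x mod 3 = x" by (rule mult_div_mod_eq)
  hence "x = 3 * (x div 3) + 2" using xm by linarith
  hence "x - 1 = 3 * (x div 3) + 1" by simp
  hence "(x - 1) mod 3 = 1" by simp
  thus ?thesis by (simp add: x_def)
qed
context ff begin

lemma tr_sq_self: "(trace m x) ^ 2 = trace m (x::'a)"
proof -
  have "(trace m x) ^ 2 = (\<Sum>i<m. (x ^ (2 ^ i)) ^ 2)" unfolding trace_def by (rule sum_sq_c2[OF char2])
  also have "\<dots> = (\<Sum>i<m. (x ^ 2) ^ (2 ^ i))"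
  proof (rule sum.cong[OF refl])
    fix i
    show "(x ^ (2 ^ i)) ^ 2 = (x ^ 2) ^ (2 ^ i)"
      by (simp only: power_mult[symmetric] mult.commute[of "2 ^ i" 2])
  qed
  also have "\<dots> = trace m (x ^ 2)" by (simp add: trace_def)
  also have "\<dots> = trace m x" by (rule tr_sq)
  finally show ?thesis .
qed

lemma tr_01: "trace m (x::'a) = 0 \<or> trace m x = 1"
proof -
  have "trace m x * (trace m x - 1) = 0" using tr_sq_self[of x] by (simp add: power2_eq_square algebra_simps)
  thus ?thesis by simp
qed

lemma bit_to_trace_seq: "bit_to (trace_seq m F \<alpha> t) = trace m (F (\<alpha> ^ t + 1))"
  using tr_01[of "F (\<alpha> ^ t + 1)"] by (auto simp: trace_seq_def)

lemma tr_conj: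
  assumes inj: "inj_on (\<lambda>i. \<alpha> ^ (e * 2 ^ i)) {..<m}"
  shows "trace m ((\<alpha> ^ t) ^ e) = (\<Sum>\<gamma>\<in>(\<lambda>i. \<alpha> ^ (e * 2 ^ i)) ` {..<m}. \<gamma> ^ t)"
proof -
  have "trace m ((\<alpha> ^ t) ^ e) = (\<Sum>i<m. ((\<alpha> ^ t) ^ e) ^ (2 ^ i))" by (simp add: trace_def)
  also have "\<dots> = (\<Sum>i<m. (\<alpha> ^ (e * 2 ^ i)) ^ t)"
  proof (rule sum.cong[OF refl])
    fix i
    have "((\<alpha> ^ t) ^ e) ^ (2 ^ i) = \<alpha> ^ (t * e * 2 ^ i)" by (simp only: power_mult[symmetric])
    also have "\<dots> = \<alpha> ^ (e * 2 ^ i * t)" by (simp only: mult_ac)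
    also have "\<dots> = (\<alpha> ^ (e * 2 ^ i)) ^ t" by (simp only: power_mult)
    finally show "((\<alpha> ^ t) ^ e) ^ (2 ^ i) = (\<alpha> ^ (e * 2 ^ i)) ^ t" .
  qed
  also have "\<dots> = (\<Sum>\<gamma>\<in>(\<lambda>i. \<alpha> ^ (e * 2 ^ i)) ` {..<m}. \<gamma> ^ t)"
    by (simp add: sum.reindex[OF inj])
  finally show ?thesis .
qed

lemma poly_mp_lin: "poly (map_poly (bit_to :: bit \<Rightarrow> 'a) [:-1, 1:]) x = 1 + x"
proof -
  have "map_poly (bit_to :: bit \<Rightarrow> 'a) [:-1, 1:] = [:bit_to (-1), bit_to 1:]"
    by (simp add: map_poly_pCons)
  thus ?thesis by simp
qed

end

theorem theorem2:
  fixes m h :: nat and \<alpha> :: "'a::{finite,field}"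
  assumes "m = 2 * h + 1" and "m \<ge> 7"
    and "card (UNIV :: 'a set) = 2 ^ m"
    and "primitive_elem \<alpha>"
  defines "s \<equiv> trace_seq m (f2 h) \<alpha>"
    and "v \<equiv> 2 ^ m - 1"
  shows "seq_min_poly s =
           [:-1, 1:] * min_poly_F2 (inverse (\<alpha> ^ 3))
             * min_poly_F2 (inverse (\<alpha> ^ (1 + 2 ^ (h - 1))))
             * min_poly_F2 (inverse (\<alpha> ^ (1 + 2 ^ (h - 1) + 2 ^ h)))
         \<and> linear_span s = 3 * m + 1
         \<and> code_dim (cyclic_code v (seq_min_poly s)) = 2 ^ m - 2 - 3 * m
         \<and> 4 \<le> min_distance (cyclic_code v (seq_min_poly s))
         \<and> min_distance (cyclic_code v (seq_min_poly s)) \<le> 8"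
proof -
  note mh = assms(1)
  have h3: "h \<ge> 3" using assms(1,2) by simp
  interpret ff m \<alpha> v
    by unfold_locales (use assms in \<open>simp_all add: v_def\<close>)
  define ea :: nat where "ea = 1 + 2 ^ (h - 1)"
  define eb :: nat where "eb = 1 + 2 ^ (h - 1) + 2 ^ h"
  define B3 :: "nat set" where "B3 = {0, 1}"
  define Ba :: "nat set" where "Ba = {0, h - 1}"
  define Bb :: "nat set" where "Bb = {0, h - 1, h}"
  define Fam where "Fam = {B3, Ba, Bb}"
  have se3: "set_encode B3 = 3" by (simp add: B3_def)
  have sea: "set_encode Ba = ea" using h3 by (simp add: Ba_def ea_def)
  have seb: "set_encode Bb = eb" using h3 by (simp add: Bb_def eb_def)
  have famp: "0 \<in> B \<and> (\<forall>p\<in>B. p \<le> h) \<and> card B \<le> 3" if "B \<in> Fam" for B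
    using that h3 by (auto simp: Fam_def B3_def Ba_def Bb_def card_insert_if)
  have dist: "B = B' \<and> i = j"
    if "B \<in> Fam" "B' \<in> Fam" "i < m" "j < m" "\<alpha> ^ (set_encode B * 2 ^ i) = \<alpha> ^ (set_encode B' * 2 ^ j)"
    for B B' i j
  proof -
    have "(set_encode B * 2 ^ i) mod (2 ^ m - 1) = (set_encode B' * 2 ^ j) mod (2 ^ m - 1)"
      using that(5) alpha_eq by (simp add: v_def)
    moreover have "0 \<in> B" "\<forall>p\<in>B. p \<le> h" "card B \<le> 3" using famp[OF that(1)] by simp_all
    moreover have "0 \<in> B'" "\<forall>p\<in>B'. p \<le> h" "card B' \<le> 3" using famp[OF that(2)] by simp_all
    ultimately show ?thesis using res_dist[OF mh h3 _ _ _ _ _ _ that(3,4)] by metis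
  qed
  have nz1: "\<alpha> ^ (set_encode B * 2 ^ i) \<noteq> 1" if "B \<in> Fam" for B i
  proof
    assume "\<alpha> ^ (set_encode B * 2 ^ i) = 1"
    hence "v dvd set_encode B * 2 ^ i" using alpha_one by simp
    hence "(set_encode B * 2 ^ i) mod (2 ^ m - 1) = 0" by (simp add: v_def)
    moreover have "0 \<in> B" "\<forall>p\<in>B. p \<le> h" "card B \<le> 3" using famp[OF that] by simp_all
    ultimately show False using res_nz[OF mh h3] by metis
  qed
  define cj where "cj B = (\<lambda>i. \<alpha> ^ (set_encode B * 2 ^ i)) ` {..<m}" for B
  have inj: "inj_on (\<lambda>i. \<alpha> ^ (set_encode B * 2 ^ i)) {..<m}" if "B \<in> Fam" for B
    using dist[OF that that] by (auto intro: inj_onI)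
  have cardcj: "card (cj B) = m" if "B \<in> Fam" for B
    using card_image[OF inj[OF that]] by (simp add: cj_def)
  have disj: "cj B \<inter> cj B' = {}" if "B \<in> Fam" "B' \<in> Fam" "B \<noteq> B'" for B B'
    using dist[OF that(1,2)] that(3) by (auto simp: cj_def)
  have one_nin: "1 \<notin> cj B" if "B \<in> Fam" for B
    using nz1[OF that] by (auto simp: cj_def)
  have ne: "B3 \<noteq> Ba" "B3 \<noteq> Bb" "Ba \<noteq> Bb" using h3
    by (auto simp: B3_def Ba_def Bb_def doubleton_eq_iff insert_eq_iff)
  have inF: "B3 \<in> Fam" "Ba \<in> Fam" "Bb \<in> Fam" by (simp_all add: Fam_def)
  define P where "P = insert 1 (cj B3 \<union> cj Ba \<union> cj Bb)"
  have fincj: "finite (cj B)" for B by (simp add: cj_def)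
  have d1: "cj B3 \<inter> cj Ba = {}" using disj inF ne by blast
  have d2: "(cj B3 \<union> cj Ba) \<inter> cj Bb = {}" using disj inF ne by blast
  have n1: "1 \<notin> cj B3 \<union> cj Ba \<union> cj Bb" using one_nin inF by blast
  have finP: "finite P" by (simp add: P_def fincj)
  have cardP: "card P = 3 * m + 1"
  proof -
    have "card (cj B3 \<union> cj Ba \<union> cj Bb) = card (cj B3) + card (cj Ba) + card (cj Bb)"
      using d1 d2 fincj by (simp add: card_Un_disjoint)
    thus ?thesis using n1 cardcj inF fincj by (simp add: P_def)
  qed
  have Pprop: "\<forall>\<gamma>\<in>P. \<gamma> \<noteq> 0 \<and> \<gamma> ^ v = 1"
  proof
    fix \<gamma> assume "\<gamma> \<in> P"
    then obtain k where "\<gamma> = 1 \<or> \<gamma> = \<alpha> ^ k" by (auto simp: P_def cj_def)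
    moreover have "(\<alpha> ^ k) ^ v = 1" by (simp add: power_mult[symmetric] mult.commute[of k v] power_mult alpha_n)
    ultimately show "\<gamma> \<noteq> 0 \<and> \<gamma> ^ v = 1" using alpha_nz by auto
  qed
  have S: "\<forall>t. bit_to (s t) = (\<Sum>\<gamma>\<in>P. \<gamma> ^ t)"
  proof
    fix t
    have "bit_to (s t) = trace m (f2 h (\<alpha> ^ t + 1))" by (simp add: s_def bit_to_trace_seq)
    also have "\<dots> = 1 + trace m ((\<alpha> ^ t) ^ set_encode B3) + trace m ((\<alpha> ^ t) ^ set_encode Ba)
        + trace m ((\<alpha> ^ t) ^ set_encode Bb)"
      using tr_f2[OF mh, of "\<alpha> ^ t"] h3 se3 sea seb by (simp add: ea_def eb_def)
    also have "\<dots> = 1 + (\<Sum>\<gamma>\<in>cj B3. \<gamma> ^ t) + (\<Sum>\<gamma>\<in>cj Ba. \<gamma> ^ t) + (\<Sum>\<gamma>\<in>cj Bb. \<gamma> ^ t)"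
      by (simp only: tr_conj[OF inj[OF inF(1)]] tr_conj[OF inj[OF inF(2)]] tr_conj[OF inj[OF inF(3)]] cj_def)
    also have "\<dots> = (\<Sum>\<gamma>\<in>P. \<gamma> ^ t)"
    proof -
      have "(\<Sum>\<gamma>\<in>P. \<gamma> ^ t) = 1 ^ t + (\<Sum>\<gamma>\<in>cj B3 \<union> cj Ba \<union> cj Bb. \<gamma> ^ t)"
        unfolding P_def using n1 fincj by (simp add: sum.insert)
      also have "(\<Sum>\<gamma>\<in>cj B3 \<union> cj Ba \<union> cj Bb. \<gamma> ^ t) = (\<Sum>\<gamma>\<in>cj B3 \<union> cj Ba. \<gamma> ^ t) + (\<Sum>\<gamma>\<in>cj Bb. \<gamma> ^ t)"
        using d2 fincj by (simp add: sum.union_disjoint)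
      also have "(\<Sum>\<gamma>\<in>cj B3 \<union> cj Ba. \<gamma> ^ t) = (\<Sum>\<gamma>\<in>cj B3. \<gamma> ^ t) + (\<Sum>\<gamma>\<in>cj Ba. \<gamma> ^ t)"
        using d1 fincj by (simp add: sum.union_disjoint)
      finally show ?thesis by (simp add: add.assoc)
    qed
    finally show "bit_to (s t) = (\<Sum>\<gamma>\<in>P. \<gamma> ^ t)" .
  qed
  define p3 where "p3 = min_poly_F2 (inverse (\<alpha> ^ 3))"
  define pa where "pa = min_poly_F2 (inverse (\<alpha> ^ ea))"
  define pb where "pb = min_poly_F2 (inverse (\<alpha> ^ eb))"
  define G where "G = [:-1, 1:] * p3 * pa * pb"
  have polyG: "poly (map_poly bit_to G) x = (1 + x) * poly (map_poly bit_to p3) x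
      * poly (map_poly bit_to pa) x * poly (map_poly bit_to pb) x" for x :: 'a
    by (simp only: G_def mp_mult[OF char2] poly_mult poly_mp_lin)
  have pmin: "poly (map_poly bit_to (min_poly_F2 (inverse (\<alpha> ^ set_encode B)))) (inverse \<gamma>) = (0::'a)"
    if "\<gamma> \<in> cj B" for B \<gamma>
  proof -
    from that obtain i where i: "\<gamma> = \<alpha> ^ (set_encode B * 2 ^ i)" unfolding cj_def by (rule imageE)
    have "inverse \<gamma> = (inverse (\<alpha> ^ set_encode B)) ^ (2 ^ i)"
      unfolding i by (simp add: power_mult power_inverse)
    thus ?thesis by (simp add: min_poly_root)
  qed
  have Gnz: "G \<noteq> 0"
  proof -
    have "[:-1, 1::bit:] \<noteq> 0" "p3 \<noteq> 0" "pa \<noteq> 0" "pb \<noteq> 0"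
      using min_poly_nz by (simp_all add: p3_def pa_def pb_def)
    thus ?thesis unfolding G_def mult_eq_0_iff by blast
  qed
  have coeffG: "coeff G 0 = 1"
  proof -
    have nz: "inverse (\<alpha> ^ k) \<noteq> 0" for k using alpha_nz by simp
    have "coeff p3 0 = 1" "coeff pa 0 = 1" "coeff pb 0 = 1"
      unfolding p3_def pa_def pb_def by (rule min_poly_coeff0[OF nz])+
    thus ?thesis by (simp add: G_def coeff_mult_0)
  qed
  have rootsG: "\<forall>\<gamma>\<in>P. poly (map_poly bit_to G) (inverse \<gamma>) = (0::'a)"
  proof
    fix \<gamma> assume g: "\<gamma> \<in> P"
    show "poly (map_poly bit_to G) (inverse \<gamma>) = 0"
    proof (cases "\<gamma> = 1")
      case True thus ?thesis by (simp add: polyG char2 one_add_one[symmetric])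
    next
      case False
      hence "\<gamma> \<in> cj B3 \<or> \<gamma> \<in> cj Ba \<or> \<gamma> \<in> cj Bb" using g by (auto simp: P_def)
      thus ?thesis
      proof (elim disjE)
        assume "\<gamma> \<in> cj B3" thus ?thesis using pmin[of \<gamma> B3] se3 by (simp add: polyG p3_def)
      next
        assume "\<gamma> \<in> cj Ba" thus ?thesis using pmin[of \<gamma> Ba] sea by (simp add: polyG pa_def)
      next
        assume "\<gamma> \<in> cj Bb" thus ?thesis using pmin[of \<gamma> Bb] seb by (simp add: polyG pb_def)
      qed
    qed
  qed
  have annG: "annihilates G s" using annih_iff[OF finP Pprop S] coeffG rootsG by blast
  have degG: "degree G \<le> card P"
  proof -
    have "degree G \<le> degree ([:-1, 1:] * p3 * pa) + degree pb" unfolding G_def by (rule degree_mult_le)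
    also have "\<dots> \<le> degree ([:-1, 1:] * p3) + degree pa + degree pb"
      by (intro add_mono degree_mult_le order_refl)
    also have "\<dots> \<le> degree [:-1, 1::bit:] + degree p3 + degree pa + degree pb"
      by (intro add_mono degree_mult_le order_refl)
    also have "\<dots> \<le> 1 + m + m + m" unfolding p3_def pa_def pb_def using min_poly by (intro add_mono) auto
    finally show ?thesis using cardP by simp
  qed
  have SM: "seq_min_poly s = G \<and> degree G = card P" by (rule seq_min_poly_eq[OF finP Pprop S annG degG])
  have dG: "degree G = 3 * m + 1" using SM cardP by simp
  have dGv: "degree G < v" using dG exp_bound[of m] assms(2) by (simp add: v_def)
  have cd: "code_dim (cyclic_code v G) = 2 ^ m - 2 - 3 * m"
    using code_dim_eq[OF Gnz dGv] dG by (simp add: v_def)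
  have ex8: "\<exists>c. c \<in> cyclic_code v G \<and> c \<noteq> 0 \<and> hamming_weight c \<le> 8"
    using low_weight_word[OF Gnz, of v] dG count_ineq[OF assms(2)] by (simp add: v_def)
  have lb: "\<forall>c\<in>cyclic_code v G. c \<noteq> 0 \<longrightarrow> hamming_weight c \<ge> 4"
  proof (intro ballI impI)
    fix c assume c: "c \<in> cyclic_code v G" "c \<noteq> 0"
    define \<beta> where "\<beta> = inverse (\<alpha> ^ 3)"
    have "G = [:-1, 1:] * (p3 * pa * pb)" unfolding G_def by (simp only: mult.assoc)
    hence d1: "[:-1, 1:] dvd G" by (rule dvdI)
    have bnz: "\<beta> \<noteq> 0" using alpha_nz by (simp add: \<beta>_def)
    have root: "poly (map_poly bit_to G) \<beta> = 0"
      using min_poly_root[of "inverse (\<alpha> ^ 3)" 0] by (simp add: polyG p3_def \<beta>_def)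
    have bord: "\<forall>k. 0 < k \<and> k < v \<longrightarrow> \<beta> ^ k \<noteq> 1"
    proof (intro allI impI notI)
      fix k assume k: "0 < k \<and> k < v" and b1: "\<beta> ^ k = 1"
      have "\<alpha> ^ (3 * k) = 1" using b1 by (simp add: \<beta>_def power_inverse power_mult)
      hence "v dvd 3 * k" using alpha_one by simp
      then obtain q where q: "3 * k = v * q" by (auto elim: dvdE)
      have "v * q < v * 3" using q k by linarith
      hence "q < 3" by simp
      moreover have "q \<noteq> 0"
      proof
        assume "q = 0"
        hence "3 * k = 0" using q by simp
        thus False using k by simp
      qed
      ultimately have "q = 1 \<or> q = 2" by auto
      moreover have "v mod 3 = 1" using n_mod3[OF mh] by (simp add: v_def)
      moreover have "3 * (v div 3) + v mod 3 = v" by (rule mult_div_mod_eq)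
      ultimately have "q = 1 \<or> q = 2" "3 * k = v * q" "3 * (v div 3) + 1 = v" using q by auto
      thus False by presburger
    qed
    show "hamming_weight c \<ge> 4" by (rule weight_ge4[OF d1 root bnz bord c])
  qed
  have md: "4 \<le> min_distance (cyclic_code v G) \<and> min_distance (cyclic_code v G) \<le> 8"
    by (rule min_dist_bounds[OF Gnz dGv ex8 lb])
  have Geq: "G = [:-1, 1:] * min_poly_F2 (inverse (\<alpha> ^ 3))
             * min_poly_F2 (inverse (\<alpha> ^ (1 + 2 ^ (h - 1))))
             * min_poly_F2 (inverse (\<alpha> ^ (1 + 2 ^ (h - 1) + 2 ^ h)))"
    by (simp add: G_def p3_def pa_def pb_def ea_def eb_def)
  show ?thesis using SM dG cd md Geq by (simp add: linear_span_def)
qed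

end
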